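(* Fix a positive integer $k$ and a permutation $\rho$. Then $\lim_{n\to\infty}\left(\operatorname{op}^*_{n,k}(\rho)\right)^{1/n}$ exists and is a real number in $[1,\infty)$.
   Context: For a permutation $\rho=\rho_1\cdots\rho_m\in\mathcal{S}_m$ and a sequence of pairwise disjoint (possibly empty) sets $B_1/B_2/\cdots/B_k$, we say it contains $\rho$ if there are indices $i_1<i_2<\cdots<i_m$ and elements $b_j\in B_{i_j}$ such that $b_1\cdots b_m$ is order-isomorphic to $\rho$ (i.e. $b_a<b_c$ iff $\rho_a<\rho_c$); otherwise it avoids $\rho$. $\operatorname{op}^*_{n,k}(\rho)$ is the number of sequences $B_1/\cdots/B_k$ of pairwise disjoint subsets of $[n]$ (blocks are allowed to be empty; order of blocks matters, order within a block does not) with $\bigcup_i B_i=[n]$ that avoid $\rho$. *)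

theory Defs
  imports Complex_Main
begin

(* A permutation rho in S_m, written in one-line notation rho_1 ... rho_m,
   represented as a list of length m that is a rearrangement of 1..m. *)
definition is_perm :: "nat list \<Rightarrow> bool" where
  "is_perm \<rho> \<longleftrightarrow> distinct \<rho> \<and> set \<rho> = {1..length \<rho>}"

(* A sequence of blocks B_1/.../B_k, as a list of sets (index i = block i+1),
   contains rho *)
definition seq_contains :: "nat set list \<Rightarrow> nat list \<Rightarrow> bool" where
  "seq_contains Bs \<rho> \<longleftrightarrow>
     (\<exists>idx :: nat \<Rightarrow> nat. \<exists>b :: nat \<Rightarrow> nat.
        (\<forall>j < length \<rho>. idx j < length Bs \<and> b j \<in> Bs ! (idx j)) \<and>
        (\<forall>j. Suc j < length \<rho> \<longrightarrow> idx j < idx (Suc j)) \<and>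
        (\<forall>a < length \<rho>. \<forall>c < length \<rho>. b a < b c \<longleftrightarrow> \<rho> ! a < \<rho> ! c))"

definition seq_avoids :: "nat set list \<Rightarrow> nat list \<Rightarrow> bool" where
  "seq_avoids Bs \<rho> \<longleftrightarrow> \<not> seq_contains Bs \<rho>"

definition op_star :: "nat \<Rightarrow> nat \<Rightarrow> nat list \<Rightarrow> nat" where
  "op_star n k \<rho> = card {Bs :: nat set list.
      length Bs = k \<and>
      (\<forall>i < k. \<forall>j < k. i \<noteq> j \<longrightarrow> Bs ! i \<inter> Bs ! j = {}) \<and>
      \<Union> (set Bs) = {1..n} \<and>
      seq_avoids Bs \<rho>}"

end

theory Submission
  imports Defs
begin


definition SS :: "nat \<Rightarrow> nat \<Rightarrow> nat list \<Rightarrow> nat set list set" where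
  "SS n k \<rho> = {Bs :: nat set list.
      length Bs = k \<and>
      (\<forall>i < k. \<forall>j < k. i \<noteq> j \<longrightarrow> Bs ! i \<inter> Bs ! j = {}) \<and>
      \<Union> (set Bs) = {1..n} \<and>
      seq_avoids Bs \<rho>}"

lemma op_star_SS: "op_star n k \<rho> = card (SS n k \<rho>)"
  unfolding op_star_def SS_def by simp

lemma SS_finite: "finite (SS n k \<rho>)"
proof -
  have "SS n k \<rho> \<subseteq> {xs. set xs \<subseteq> Pow {1..n} \<and> length xs = k}"
    unfolding SS_def by auto
  moreover have "finite {xs. set xs \<subseteq> Pow {1..n} \<and> length xs = k}"
    by (intro finite_lists_length_eq) auto
  ultimately show ?thesis by (rule finite_subset)
qed

lemma SS_nonempty:
  assumes "k \<ge> 1" "length \<rho> \<ge> 2"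
  shows "({1..n} # replicate (k-1) {}) \<in> SS n k \<rho>"
proof -
  let ?B = "{1..n} # replicate (k-1) {} :: nat set list"
  have nth: "?B ! i = {}" if "i \<ge> 1" "i < k" for i
    using that by (cases i) auto
  have len: "length ?B = k" using assms by simp
  have disj: "\<forall>i < k. \<forall>j < k. i \<noteq> j \<longrightarrow> ?B ! i \<inter> ?B ! j = {}"
  proof (intro allI impI)
    fix i j assume "i < k" "j < k" "i \<noteq> j"
    then have "i \<ge> 1 \<or> j \<ge> 1" by auto
    then show "?B ! i \<inter> ?B ! j = {}" using nth \<open>i<k\<close> \<open>j<k\<close> by auto
  qed
  have un: "\<Union> (set ?B) = {1..n}" by auto
  have av: "seq_avoids ?B \<rho>"
    unfolding seq_avoids_def seq_contains_def
  proof
    assume "\<exists>idx b. (\<forall>j<length \<rho>. idx j < length ?B \<and> b j \<in> ?B ! idx j) \<and>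
       (\<forall>j. Suc j < length \<rho> \<longrightarrow> idx j < idx (Suc j)) \<and>
       (\<forall>a<length \<rho>. \<forall>c<length \<rho>. (b a < b c) = (\<rho> ! a < \<rho> ! c))"
    then obtain idx b where h1: "\<forall>j<length \<rho>. idx j < length ?B \<and> b j \<in> ?B ! idx j"
      and h2: "\<forall>j. Suc j < length \<rho> \<longrightarrow> idx j < idx (Suc j)" by blast
    have "idx 0 < idx 1" using h2 assms by auto
    moreover have "idx 1 < k" "b 1 \<in> ?B ! idx 1" using h1 assms len by auto
    ultimately show False using nth[of "idx 1"] by auto
  qed
  show ?thesis unfolding SS_def using len disj un av by blast
qed

lemma SS_card_pos:
  assumes "k \<ge> 1" "length \<rho> \<ge> 2"
  shows "card (SS n k \<rho>) \<ge> 1"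
  using SS_nonempty[OF assms] SS_finite
  by (metis One_nat_def Suc_leI card_gt_0_iff empty_iff)

lemma shift_img: "(\<lambda>x. x - a) ` {a+1..a+b} = {1..(b::nat)}"
proof
  show "{1..b} \<subseteq> (\<lambda>x. x - a) ` {a+1..a+b}"
  proof
    fix y assume "y \<in> {1..b}"
    then have "y + a \<in> {a+1..a+b}" "y = (y + a) - a" by auto
    then show "y \<in> (\<lambda>x. x - a) ` {a+1..a+b}" by blast
  qed
qed auto

lemma SS_submult:
  "card (SS (a+b) k \<rho>) \<le> card (SS a k \<rho>) * card (SS b k \<rho>)"
proof -
  define I where "I = {1..a}"
  define J where "J = {a+1..a+b}"
  define g where "g = (\<lambda>x::nat. x - a)"
  define \<phi> where "\<phi> = (\<lambda>Bs. (map (\<lambda>B. B \<inter> I) Bs, map (\<lambda>B. g ` (B \<inter> J)) Bs))"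
  have maps: "\<phi> Bs \<in> SS a k \<rho> \<times> SS b k \<rho>" if Bs: "Bs \<in> SS (a+b) k \<rho>" for Bs
  proof -
    from Bs have len: "length Bs = k"
      and disj: "\<forall>i < k. \<forall>j < k. i \<noteq> j \<longrightarrow> Bs ! i \<inter> Bs ! j = {}"
      and un: "\<Union> (set Bs) = {1..a+b}"
      and av: "\<not> seq_contains Bs \<rho>"
      unfolding SS_def seq_avoids_def by auto
    have ginj: "inj_on g J" unfolding g_def J_def inj_on_def by auto
    have A: "map (\<lambda>B. B \<inter> I) Bs \<in> SS a k \<rho>"
    proof -
      have "\<Union> (set (map (\<lambda>B. B \<inter> I) Bs)) = \<Union> (set Bs) \<inter> I" by auto
      also have "\<dots> = {1..a}" unfolding un I_def by auto
      finally have u: "\<Union> (set (map (\<lambda>B. B \<inter> I) Bs)) = {1..a}" .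
      have d: "\<forall>i < k. \<forall>j < k. i \<noteq> j \<longrightarrow> map (\<lambda>B. B \<inter> I) Bs ! i \<inter> map (\<lambda>B. B \<inter> I) Bs ! j = {}"
        using disj len by auto
      have c: "\<not> seq_contains (map (\<lambda>B. B \<inter> I) Bs) \<rho>"
      proof
        assume "seq_contains (map (\<lambda>B. B \<inter> I) Bs) \<rho>"
        then obtain idx bb where
          h1: "\<forall>j<length \<rho>. idx j < length (map (\<lambda>B. B \<inter> I) Bs) \<and> bb j \<in> map (\<lambda>B. B \<inter> I) Bs ! idx j"
          and h2: "\<forall>j. Suc j < length \<rho> \<longrightarrow> idx j < idx (Suc j)"
          and h3: "\<forall>x<length \<rho>. \<forall>c<length \<rho>. bb x < bb c \<longleftrightarrow> \<rho> ! x < \<rho> ! c"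
          unfolding seq_contains_def by blast
        have "\<forall>j<length \<rho>. idx j < length Bs \<and> bb j \<in> Bs ! idx j" using h1 by auto
        then have "seq_contains Bs \<rho>" unfolding seq_contains_def using h2 h3 by blast
        with av show False by simp
      qed
      have l: "length (map (\<lambda>B. B \<inter> I) Bs) = k" using len by simp
      show ?thesis unfolding SS_def seq_avoids_def mem_Collect_eq using u d c l by blast
    qed
    have B: "map (\<lambda>B. g ` (B \<inter> J)) Bs \<in> SS b k \<rho>"
    proof -
      have "\<Union> (set (map (\<lambda>B. g ` (B \<inter> J)) Bs)) = g ` (\<Union> (set Bs) \<inter> J)" by auto
      also have "\<dots> = {1..b}" proof -
        have "{1..a+b} \<inter> J = J" unfolding J_def by auto
        then show ?thesis unfolding un using shift_img[of a b] unfolding J_def g_def by simp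
      qed
      finally have u: "\<Union> (set (map (\<lambda>B. g ` (B \<inter> J)) Bs)) = {1..b}" .
      have d: "\<forall>i < k. \<forall>j < k. i \<noteq> j \<longrightarrow> map (\<lambda>B. g ` (B \<inter> J)) Bs ! i \<inter> map (\<lambda>B. g ` (B \<inter> J)) Bs ! j = {}"
      proof (intro allI impI)
        fix i j assume "i < k" "j < k" "i \<noteq> j"
        then have "Bs ! i \<inter> Bs ! j = {}" using disj by auto
        then have "g ` (Bs ! i \<inter> J) \<inter> g ` (Bs ! j \<inter> J) = {}"
          using inj_on_image_Int[OF ginj, of "Bs ! i \<inter> J" "Bs ! j \<inter> J"] by (simp add: Int_ac)
        then show "map (\<lambda>B. g ` (B \<inter> J)) Bs ! i \<inter> map (\<lambda>B. g ` (B \<inter> J)) Bs ! j = {}"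
          using \<open>i<k\<close> \<open>j<k\<close> len by simp
      qed
      have c: "\<not> seq_contains (map (\<lambda>B. g ` (B \<inter> J)) Bs) \<rho>"
      proof
        assume "seq_contains (map (\<lambda>B. g ` (B \<inter> J)) Bs) \<rho>"
        then obtain idx bb where
          h1: "\<forall>j<length \<rho>. idx j < length (map (\<lambda>B. g ` (B \<inter> J)) Bs) \<and> bb j \<in> map (\<lambda>B. g ` (B \<inter> J)) Bs ! idx j"
          and h2: "\<forall>j. Suc j < length \<rho> \<longrightarrow> idx j < idx (Suc j)"
          and h3: "\<forall>x<length \<rho>. \<forall>c<length \<rho>. bb x < bb c \<longleftrightarrow> \<rho> ! x < \<rho> ! c"
          unfolding seq_contains_def by blast
        have "\<forall>j<length \<rho>. idx j < length Bs \<and> bb j + a \<in> Bs ! idx j"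
        proof (intro allI impI)
          fix j assume "j < length \<rho>"
          then have "idx j < length Bs" "bb j \<in> g ` (Bs ! idx j \<inter> J)" using h1 by auto
          then obtain x where "x \<in> Bs ! idx j" "x \<in> J" "bb j = x - a" unfolding g_def by auto
          then have "bb j + a = x" unfolding J_def by auto
          then show "idx j < length Bs \<and> bb j + a \<in> Bs ! idx j"
            using \<open>idx j < length Bs\<close> \<open>x \<in> Bs ! idx j\<close> by simp
        qed
        moreover have "\<forall>x<length \<rho>. \<forall>c<length \<rho>. bb x + a < bb c + a \<longleftrightarrow> \<rho> ! x < \<rho> ! c"
          using h3 by simp
        ultimately have "seq_contains Bs \<rho>" unfolding seq_contains_def using h2
          by - (rule exI[of _ idx], rule exI[of _ "\<lambda>j. bb j + a"], blast)
        with av show False by simp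
      qed
      have l: "length (map (\<lambda>B. g ` (B \<inter> J)) Bs) = k" using len by simp
      show ?thesis unfolding SS_def seq_avoids_def mem_Collect_eq using u d c l by blast
    qed
    show ?thesis using A B unfolding \<phi>_def by simp
  qed
  have inj: "inj_on \<phi> (SS (a+b) k \<rho>)"
  proof (rule inj_onI)
    fix X Y assume X: "X \<in> SS (a+b) k \<rho>" and Y: "Y \<in> SS (a+b) k \<rho>" and e: "\<phi> X = \<phi> Y"
    have lenX: "length X = k" and unX: "\<Union> (set X) = {1..a+b}" using X unfolding SS_def by auto
    have lenY: "length Y = k" and unY: "\<Union> (set Y) = {1..a+b}" using Y unfolding SS_def by auto
    have rec: "B = (B \<inter> I) \<union> (\<lambda>y. y + a) ` (g ` (B \<inter> J))" if "B \<subseteq> {1..a+b}" for B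
    proof
      show "B \<subseteq> (B \<inter> I) \<union> (\<lambda>y. y + a) ` (g ` (B \<inter> J))"
      proof
        fix x assume "x \<in> B"
        show "x \<in> (B \<inter> I) \<union> (\<lambda>y. y + a) ` (g ` (B \<inter> J))"
        proof (cases "x \<le> a")
          case True then show ?thesis using \<open>x\<in>B\<close> that unfolding I_def by auto
        next
          case False
          then have "x \<in> B \<inter> J" "x = g x + a" using \<open>x\<in>B\<close> that unfolding J_def g_def by auto
          then show ?thesis by blast
        qed
      qed
      show "(B \<inter> I) \<union> (\<lambda>y. y + a) ` (g ` (B \<inter> J)) \<subseteq> B"
        unfolding g_def J_def by auto
    qed
    show "X = Y"
    proof (rule nth_equalityI)
      show "length X = length Y" using lenX lenY by simp
      fix i assume i: "i < length X"
      have sX: "X ! i \<subseteq> {1..a+b}" using unX i nth_mem[OF i] by blast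
      have sY: "Y ! i \<subseteq> {1..a+b}" using unY i lenX lenY nth_mem[of i Y] by auto
      have m1: "map (\<lambda>B. B \<inter> I) X = map (\<lambda>B. B \<inter> I) Y"
        and m2: "map (\<lambda>B. g ` (B \<inter> J)) X = map (\<lambda>B. g ` (B \<inter> J)) Y"
        using e unfolding \<phi>_def by simp_all
      have iY: "i < length Y" using i lenX lenY by simp
      have e1: "X ! i \<inter> I = Y ! i \<inter> I"
        using arg_cong[OF m1, of "\<lambda>l. l ! i"] i iY by simp
      have e2: "g ` (X ! i \<inter> J) = g ` (Y ! i \<inter> J)"
        using arg_cong[OF m2, of "\<lambda>l. l ! i"] i iY by simp
      have "X ! i = (X ! i \<inter> I) \<union> (\<lambda>y. y + a) ` (g ` (X ! i \<inter> J))" by (rule rec[OF sX])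
      also have "\<dots> = (Y ! i \<inter> I) \<union> (\<lambda>y. y + a) ` (g ` (Y ! i \<inter> J))" by (simp only: e1 e2)
      also have "\<dots> = Y ! i" by (rule rec[OF sY, symmetric])
      finally show "X ! i = Y ! i" .
    qed
  qed
  have "card (SS (a+b) k \<rho>) \<le> card (SS a k \<rho> \<times> SS b k \<rho>)"
    proof (rule card_inj_on_le[OF inj])
    show "\<phi> ` SS (a + b) k \<rho> \<subseteq> SS a k \<rho> \<times> SS b k \<rho>" using maps by blast
    show "finite (SS a k \<rho> \<times> SS b k \<rho>)" by (intro finite_cartesian_product SS_finite)
  qed
  then show ?thesis by (simp only: card_cartesian_product)
qed



lemma fekete_iter:
  fixes f :: "nat \<Rightarrow> real"
  assumes pos: "\<And>n. f n \<ge> 1" and sub: "\<And>a b. f (a+b) \<le> f a * f b"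
  shows "f (s*q + r) \<le> f q ^ s * f r"
proof (induction s)
  case 0 then show ?case by simp
next
  case (Suc s)
  have "f (Suc s * q + r) = f (q + (s*q + r))" by (simp add: add.assoc)
  also have "\<dots> \<le> f q * f (s*q + r)" by (rule sub)
  also have "\<dots> \<le> f q * (f q ^ s * f r)"
    using Suc.IH pos[of q] by (intro mult_left_mono) auto
  finally show ?case by (simp add: mult.assoc)
qed

lemma fekete_mult:
  fixes f :: "nat \<Rightarrow> real"
  assumes pos: "\<And>n. f n \<ge> 1" and sub: "\<And>a b. f (a+b) \<le> f a * f b"
  shows "\<exists>L. (\<lambda>n. root n (f n)) \<longlonglongrightarrow> L \<and> 1 \<le> L"
proof -
  define R where "R = (\<lambda>n. root n (f n)) ` {1..}"
  define L where "L = Inf R"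
  have Rne: "R \<noteq> {}" unfolding R_def by auto
  have Rge: "\<And>x. x \<in> R \<Longrightarrow> 1 \<le> x" unfolding R_def using pos real_root_ge_1_iff by auto
  have bdd: "bdd_below R" using Rge by (intro bdd_belowI[of R 1]) auto
  have L1: "1 \<le> L" unfolding L_def using Rne Rge by (intro cInf_greatest) auto
  have Lle: "L \<le> root n (f n)" if "n \<ge> 1" for n
    unfolding L_def using bdd that by (intro cInf_lower) (auto simp: R_def)
  have main: "root n (f n) \<le> root q (f q) * root n (Max (f ` {..<q}))" if "n \<ge> 1" "q \<ge> 1" for n q
  proof -
    define a where "a = root q (f q)"
    define M where "M = Max (f ` {..<q})"
    have a1: "1 \<le> a" unfolding a_def using pos that real_root_ge_1_iff by auto
    have fq: "f q = a ^ q" unfolding a_def using pos[of q] that by (simp add: real_root_pow_pos2)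
    have n: "n = (n div q) * q + n mod q" by simp
    have "f n \<le> f q ^ (n div q) * f (n mod q)"
      using fekete_iter[OF pos sub, of "n div q" q "n mod q"] n by simp
    also have "\<dots> \<le> a ^ n * M"
    proof (rule mult_mono)
      have "f q ^ (n div q) = a ^ (q * (n div q))" unfolding fq by (simp add: power_mult)
      also have "\<dots> \<le> a ^ n" proof -
        have "q * (n div q) \<le> n" by (metis mult.commute div_mult_mod_eq le_add1)
        then show ?thesis using a1 by (intro power_increasing) auto
      qed
      finally show "f q ^ (n div q) \<le> a ^ n" .
      have "n mod q < q" using that by simp
      then show "f (n mod q) \<le> M" unfolding M_def by (intro Max_ge) auto
      show "0 \<le> a ^ n" using a1 by simp
      show "0 \<le> f (n mod q)" using pos[of "n mod q"] by simp
    qed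
    finally have "root n (f n) \<le> root n (a ^ n * M)" using that by (intro real_root_le_mono) auto
    also have "\<dots> = a * root n M" using that a1 by (simp add: real_root_mult real_root_pos2)
    finally show ?thesis unfolding a_def M_def .
  qed
  have "(\<lambda>n. root n (f n)) \<longlonglongrightarrow> L"
  proof (rule LIMSEQ_I)
    fix r :: real assume r: "0 < r"
    have "Inf R < L + r/2" unfolding L_def using r by simp
    then obtain x where "x \<in> R" "x < L + r/2" using cInf_lessD[OF Rne] by blast
    then obtain q where q: "q \<ge> 1" and aq: "root q (f q) < L + r/2" unfolding R_def by auto
    define a where "a = root q (f q)"
    define M where "M = Max (f ` {..<q})"
    have a1: "1 \<le> a" unfolding a_def using pos q real_root_ge_1_iff by auto
    have "f 0 \<le> Max (f ` {..<q})" using q by (intro Max_ge) auto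
    then have M1: "1 \<le> M" using pos[of 0] unfolding M_def by linarith
    have "(\<lambda>n. root n M) \<longlonglongrightarrow> 1" using M1 by (intro LIMSEQ_root_const) auto
    moreover have "0 < r / (2*a)" using r a1 by simp
    ultimately obtain N where N: "\<forall>n\<ge>N. norm (root n M - 1) < r / (2*a)" by (metis LIMSEQ_D)
    show "\<exists>no. \<forall>n\<ge>no. norm (root n (f n) - L) < r"
    proof (intro exI allI impI)
      fix n assume n: "max N 1 \<le> n"
      have "root n M - 1 < r / (2*a)" using N n by auto
      then have "a * (root n M - 1) < a * (r / (2*a))" using a1 by (intro mult_strict_left_mono) auto
      then have "a * root n M < a + r/2" using a1 by (simp add: algebra_simps)
      moreover have "root n (f n) \<le> a * root n M" using main[of n q] n q unfolding a_def M_def by auto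
      moreover have "L \<le> root n (f n)" using Lle n by auto
      ultimately show "norm (root n (f n) - L) < r" using aq unfolding a_def by auto
    qed
  qed
  then show ?thesis using L1 by blast
qed


theorem theorem10:
  fixes k :: nat and \<rho> :: "nat list"
  assumes "k \<ge> 1" and "is_perm \<rho>" and "length \<rho> \<ge> 2"
  shows "\<exists>L :: real. (\<lambda>n. root n (real (op_star n k \<rho>))) \<longlonglongrightarrow> L \<and> 1 \<le> L"
proof -
  have p: "\<And>n. 1 \<le> real (op_star n k \<rho>)"
    using SS_card_pos[OF assms(1) assms(3)] by (simp add: op_star_SS)
  have s: "\<And>a b. real (op_star (a+b) k \<rho>) \<le> real (op_star a k \<rho>) * real (op_star b k \<rho>)"
  proof -
    fix a b
    have "op_star (a+b) k \<rho> \<le> op_star a k \<rho> * op_star b k \<rho>"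
      unfolding op_star_SS by (rule SS_submult)
    then show "real (op_star (a+b) k \<rho>) \<le> real (op_star a k \<rho>) * real (op_star b k \<rho>)"
      by (metis of_nat_le_iff of_nat_mult)
  qed
  show ?thesis by (rule fekete_mult[OF p s])
qed

end
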